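(* Let $a\in\mathbb{R}$ and $k\ge0$. Then $$(z-a)^3q_{2k+1}^{(\mathrm{pre})}(z)=(z-a)^2z^{2k+2}+a\frac{(2k+1)!!}{2^{k+2}f_k(a^2)}\mathcal L_{k+1}(z,a),$$ $$(z-a)^3q_{2k}^{(\mathrm{pre})}(z)=a(z-a)^2\frac{e_{k+1}(a^2)}{f_k(a^2)}z^{2k+2}+\frac{(2k+3)!!}{2^{k+3}f_k(a^2)}\mathcal L_{k+2}(z,a)-a^2\frac{(2k+1)!!}{2^{k+2}f_k(a^2)}\mathcal L_{k+1}(z,a),$$ where $$\mathcal L_m(z,a)=(2(z-a)^2-1)\varkappa_m^{(\mathrm g)}(z,a)+2(z-a)e_{2m-1}(2za)-(z-a)\frac{2^{m+1}z^{2m}}{(2m-1)!!}e_{m-1}(a^2).$$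
   Context: $e_k(x)=\sum_{j=0}^kx^j/j!$, $f_k(x)=(k+1)e_k(x)-xe_{k-1}(x)$ (with $e_{-1}\equiv0$). $\varkappa_m^{(\mathrm g)}(z,w)=\sqrt2\sum_{n=0}^{m-1}\sum_{\ell=0}^{n}\Big(\frac{(\sqrt2z)^{2n+1}}{(2n+1)!!}\frac{(\sqrt2w)^{2\ell}}{(2\ell)!!}-\frac{(\sqrt2w)^{2n+1}}{(2n+1)!!}\frac{(\sqrt2z)^{2\ell}}{(2\ell)!!}\Big)$. The polynomials are $q_{2k}^{(\mathrm{pre})}(z)=\sum_{j=0}^{2k}\alpha_{2k,j}z^j$, $q_{2k+1}^{(\mathrm{pre})}(z)=\sum_{j=0}^{2k+1}\beta_{2k+1,j}z^j$ with, writing $c_{j,k}=\frac{2^jf_j(a^2)}{2^kf_k(a^2)}$: $\alpha_{2k,2j}=c_{j,k}\big[\sum_{\ell=j}^k(\ell+1-j)\frac{(2k+3)!!}{(2\ell+3)!!}(2a^2)^{\ell-j}-\sum_{\ell=j}^k(\ell-j)\frac{(2k+1)!!}{(2\ell+1)!!}(2a^2)^{\ell-j}\big]$ ($0\le j\le k$); $\alpha_{2k,2j+1}=2a\,c_{j,k}\big[\sum_{\ell=j}^{k-1}(\ell+1-j)\frac{(2k+3)!!}{(2\ell+5)!!}(2a^2)^{\ell-j}-\sum_{\ell=j}^{k-1}(\ell-j)\frac{(2k+1)!!}{(2\ell+3)!!}(2a^2)^{\ell-j}\big]$ ($0\le j\le k-1$); $\beta_{2k+1,2j}=a\,c_{j,k}\big[\frac{2j+1}{2k+3}(2a^2)^{k-j}+2\sum_{\ell=j}^k(\ell+1-j)\frac{(2k+1)!!}{(2\ell+3)!!}(2a^2)^{\ell-j}\big]$;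 $\beta_{2k+1,2j+1}=c_{j,k}\big[\frac{2j+3}{2k+3}(2a^2)^{k-j}+2\sum_{\ell=j}^k(\ell-j)\frac{(2k+1)!!}{(2\ell+3)!!}(2a^2)^{\ell-j}\big]$ ($0\le j\le k$). *)

theory Defs
  imports Complex_Main
begin

fun dfact :: "nat \<Rightarrow> nat" where
  "dfact 0 = 1"
| "dfact (Suc 0) = 1"
| "dfact (Suc (Suc n)) = Suc (Suc n) * dfact n"

definition ek :: "nat \<Rightarrow> 'a::field_char_0 \<Rightarrow> 'a" where
  "ek k x = (\<Sum>j\<le>k. x ^ j / fact j)"

definition fk :: "nat \<Rightarrow> 'a::field_char_0 \<Rightarrow> 'a" where
  "fk k x = of_nat (k + 1) * ek k x - (if k = 0 then 0 else x * ek (k - 1) x)"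

definition kappa_g :: "nat \<Rightarrow> complex \<Rightarrow> complex \<Rightarrow> complex" where
  "kappa_g m z w = of_real (sqrt 2) *
     (\<Sum>n<m. \<Sum>l\<le>n.
        (of_real (sqrt 2) * z) ^ (2*n+1) / of_nat (dfact (2*n+1))
          * (of_real (sqrt 2) * w) ^ (2*l) / of_nat (dfact (2*l))
      - (of_real (sqrt 2) * w) ^ (2*n+1) / of_nat (dfact (2*n+1))
          * (of_real (sqrt 2) * z) ^ (2*l) / of_nat (dfact (2*l)))"

definition cjk :: "real \<Rightarrow> nat \<Rightarrow> nat \<Rightarrow> real" where
  "cjk a j k = (2 ^ j * fk j (a^2)) / (2 ^ k * fk k (a^2))"

definition alpha_even :: "real \<Rightarrow> nat \<Rightarrow> nat \<Rightarrow> real" where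
  "alpha_even a k j = cjk a j k *
     ((\<Sum>l=j..k. real (l + 1 - j) * real (dfact (2*k+3)) / real (dfact (2*l+3)) * (2*a^2) ^ (l - j))
    - (\<Sum>l=j..k. real (l - j) * real (dfact (2*k+1)) / real (dfact (2*l+1)) * (2*a^2) ^ (l - j)))"

definition alpha_odd :: "real \<Rightarrow> nat \<Rightarrow> nat \<Rightarrow> real" where
  "alpha_odd a k j = 2 * a * cjk a j k *
     ((\<Sum>l\<in>{j..<k}. real (l + 1 - j) * real (dfact (2*k+3)) / real (dfact (2*l+5)) * (2*a^2) ^ (l - j))
    - (\<Sum>l\<in>{j..<k}. real (l - j) * real (dfact (2*k+1)) / real (dfact (2*l+3)) * (2*a^2) ^ (l - j)))"

definition beta_even :: "real \<Rightarrow> nat \<Rightarrow> nat \<Rightarrow> real" where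
  "beta_even a k j = a * cjk a j k *
     (real (2*j+1) / real (2*k+3) * (2*a^2) ^ (k - j)
    + 2 * (\<Sum>l=j..k. real (l + 1 - j) * real (dfact (2*k+1)) / real (dfact (2*l+3)) * (2*a^2) ^ (l - j)))"

definition beta_odd :: "real \<Rightarrow> nat \<Rightarrow> nat \<Rightarrow> real" where
  "beta_odd a k j = cjk a j k *
     (real (2*j+3) / real (2*k+3) * (2*a^2) ^ (k - j)
    + 2 * (\<Sum>l=j..k. real (l - j) * real (dfact (2*k+1)) / real (dfact (2*l+3)) * (2*a^2) ^ (l - j)))"

definition q_pre_even :: "real \<Rightarrow> nat \<Rightarrow> complex \<Rightarrow> complex" where
  "q_pre_even a k z = (\<Sum>i\<le>2*k.
     of_real (if even i then alpha_even a k (i div 2) else alpha_odd a k (i div 2)) * z ^ i)"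

definition q_pre_odd :: "real \<Rightarrow> nat \<Rightarrow> complex \<Rightarrow> complex" where
  "q_pre_odd a k z = (\<Sum>i\<le>2*k+1.
     of_real (if even i then beta_even a k (i div 2) else beta_odd a k (i div 2)) * z ^ i)"

text \<open>L_m(z,a), used for m \<ge> 1.\<close>
definition Lm :: "nat \<Rightarrow> complex \<Rightarrow> real \<Rightarrow> complex" where
  "Lm m z a = (2 * (z - of_real a)^2 - 1) * kappa_g m z (of_real a)
     + 2 * (z - of_real a) * ek (2*m - 1) (2 * z * of_real a)
     - (z - of_real a) * (2 ^ (m+1) * z ^ (2*m) / of_nat (dfact (2*m - 1))) * of_real (ek (m - 1) (a^2))"

end

theory Submission
  imports Defs
begin


lemma dfact_pos: "dfact n > 0"
  by (induction n rule: dfact.induct) auto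

lemma dfact_odd_Suc: "dfact (2 * Suc n + 1) = (2*n+3) * dfact (2*n+1)"
proof -
  have "2 * Suc n + 1 = Suc (Suc (2*n+1))" by simp
  then show ?thesis by (simp add: algebra_simps)
qed

lemma dfact_even: "dfact (2*l) = 2^l * fact l"
proof (induction l)
  case 0 then show ?case by simp
next
  case (Suc l)
  have "2 * Suc l = Suc (Suc (2*l))" by simp
  then show ?case using Suc by (simp add: algebra_simps)
qed

lemma ek_0[simp]: "ek 0 x = 1" by (simp add: ek_def)
lemma ek_Suc: "ek (Suc n) x = ek n x + x^(Suc n) / fact (Suc n)"
  by (simp add: ek_def)

lemma opn_nz[simp]: "(1 + of_nat k :: 'a::field_char_0) \<noteq> 0" "(of_nat k + 1 :: 'a::field_char_0) \<noteq> 0"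
proof -
  have "(of_nat (Suc k) :: 'a) \<noteq> 0" by (simp only: of_nat_eq_0_iff)
  then show "(1 + of_nat k :: 'a::field_char_0) \<noteq> 0" "(of_nat k + 1 :: 'a::field_char_0) \<noteq> 0"
    by (metis of_nat_Suc add.commute)+
qed

lemma fk_alt: "fk k x = (of_nat k + 1 - x) * ek k x + x * (x^k / fact k)"
proof (cases k)
  case 0 then show ?thesis by (simp add: fk_def)
next
  case (Suc m)
  define u where "u = x^Suc m / fact (Suc m)"
  have e: "ek (Suc m) x = ek m x + u" by (simp add: ek_Suc u_def)
  show ?thesis unfolding Suc fk_def e u_def[symmetric] by (simp add: algebra_simps)
qed

lemma fk_0[simp]: "fk 0 x = 1" by (simp add: fk_def)

lemma fact_key: "(of_nat (Suc k) :: 'a::field_char_0) * (x^(Suc k) / fact (Suc k)) = x * (x^k / fact k)"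
  by (simp add: divide_simps)

lemma fk_Suc: "fk (Suc k) x = fk k x + ek (Suc k) x"
proof -
  define u where "u = x^Suc k / fact (Suc k)"
  define w where "w = x * (x^k / fact k)"
  have key: "(of_nat k + 1) * u = w"
    unfolding u_def w_def by (metis fact_key of_nat_Suc add.commute)
  have e: "ek (Suc k) x = ek k x + u" by (simp add: ek_Suc u_def)
  show ?thesis
    unfolding fk_alt[of "Suc k"] fk_alt[of k] e u_def[symmetric] w_def[symmetric]
    by (subst key[symmetric]) (simp add: algebra_simps)
qed

lemma ek_nonneg: "(x::real) \<ge> 0 \<Longrightarrow> ek n x \<ge> 0"
  unfolding ek_def by (intro sum_nonneg) auto

lemma fk_pos: "(x::real) \<ge> 0 \<Longrightarrow> fk k x > 0"
proof (induction k)
  case 0 then show ?case by simp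
next
  case (Suc k) then show ?case using ek_nonneg[of x "Suc k"] by (simp add: fk_Suc)
qed

lemma of_real_ek: "of_real (ek n x) = ek n (of_real x :: 'a::{real_field,field_char_0})"
  unfolding ek_def by (simp add: of_real_sum)

lemma of_real_fk: "of_real (fk n x) = fk n (of_real x :: 'a::{real_field,field_char_0})"
  unfolding fk_def by (simp add: of_real_ek)


lemma s2: "(of_real (sqrt 2)::complex)^2 = 2"
  by (metis of_real_numeral of_real_power real_sqrt_pow2 zero_le_numeral)

lemma kterm: "of_real (sqrt 2) * ((of_real (sqrt 2) * (z::complex)) ^ (2*n+1) / of_nat (dfact (2*n+1)) * (of_real (sqrt 2) * w) ^ (2*l) / of_nat (dfact (2*l)))
   = 2^(n+1) / of_nat (dfact (2*n+1)) * z^(2*n+1) * ((w^2)^l / fact l)"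
proof -
  let ?s = "of_real (sqrt 2)::complex"
  have a: "(?s * z) ^ (2*n+1) = ?s * 2^n * z^(2*n+1)"
    by (simp add: power_mult_distrib power_add power_mult s2)
  have b: "(?s * w) ^ (2*l) = 2^l * (w^2)^l"
    by (simp add: power_mult_distrib power_mult s2)
  have c: "(of_nat (dfact (2*l)) :: complex) = 2^l * fact l"
    by (simp add: dfact_even)
  have d: "?s * ?s = 2" using s2 by (simp add: power2_eq_square)
  have "?s * ((?s * z) ^ (2*n+1) / of_nat (dfact (2*n+1)) * (?s * w) ^ (2*l) / of_nat (dfact (2*l)))
     = (?s * ?s) * 2^n * z^(2*n+1) / of_nat (dfact (2*n+1)) * (2^l * (w^2)^l) / (2^l * fact l)"
    unfolding a b c by (simp add: algebra_simps)
  also have "\<dots> = 2^(n+1) / of_nat (dfact (2*n+1)) * z^(2*n+1) * ((w^2)^l / fact l)"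
    unfolding d by (simp add: field_simps)
  finally show ?thesis .
qed

lemma kappa_0[simp]: "kappa_g 0 z w = 0" by (simp add: kappa_g_def)

lemma kappa_Suc: "kappa_g (Suc m) z w = kappa_g m z w
   + 2^(m+1) / of_nat (dfact (2*m+1)) * (z^(2*m+1) * ek m (w^2) - w^(2*m+1) * ek m (z^2))"
proof -
  let ?s = "of_real (sqrt 2)::complex"
  have "?s * (\<Sum>l\<le>m. (?s * z) ^ (2*m+1) / of_nat (dfact (2*m+1)) * (?s * w) ^ (2*l) / of_nat (dfact (2*l))
      - (?s * w) ^ (2*m+1) / of_nat (dfact (2*m+1)) * (?s * z) ^ (2*l) / of_nat (dfact (2*l)))
    = (\<Sum>l\<le>m. 2^(m+1) / of_nat (dfact (2*m+1)) * z^(2*m+1) * ((w^2)^l / fact l)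
         - 2^(m+1) / of_nat (dfact (2*m+1)) * w^(2*m+1) * ((z^2)^l / fact l))"
    unfolding sum_distrib_left right_diff_distrib kterm ..
  also have "\<dots> = 2^(m+1) / of_nat (dfact (2*m+1)) * (z^(2*m+1) * ek m (w^2) - w^(2*m+1) * ek m (z^2))"
    unfolding ek_def sum_subtractf sum_distrib_left right_diff_distrib by (simp add: mult.assoc)
  finally have *: "?s * (\<Sum>l\<le>m. (?s * z) ^ (2*m+1) / of_nat (dfact (2*m+1)) * (?s * w) ^ (2*l) / of_nat (dfact (2*l))
      - (?s * w) ^ (2*m+1) / of_nat (dfact (2*m+1)) * (?s * z) ^ (2*l) / of_nat (dfact (2*l))) = 
      2^(m+1) / of_nat (dfact (2*m+1)) * (z^(2*m+1) * ek m (w^2) - w^(2*m+1) * ek m (z^2))" .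
  show ?thesis unfolding kappa_g_def sum.lessThan_Suc distrib_left * ..
qed


definition DL :: "nat \<Rightarrow> complex \<Rightarrow> complex \<Rightarrow> complex" where
  "DL n z A = (2*(z-A)^2-1) * (2^(n+2) / of_nat (dfact (2*n+3))) * (z^(2*n+3) * ek (n+1) (A^2) - A^(2*n+3) * ek (n+1) (z^2))
     + 2*(z-A) * ((2*z*A)^(2*n+2) / fact (2*n+2) + (2*z*A)^(2*n+3) / fact (2*n+3))
     - (z-A) * (2^(n+3) * z^(2*n+4) / of_nat (dfact (2*n+3)) * ek (n+1) (A^2) - 2^(n+2) * z^(2*n+2) / of_nat (dfact (2*n+1)) * ek n (A^2))"

lemma Lm_Suc: "Lm (Suc (Suc n)) z a = Lm (Suc n) z a + DL n z (of_real a)"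
proof -
  have k: "kappa_g (Suc (Suc n)) z (of_real a) = kappa_g (Suc n) z (of_real a) + 2^(n+2) / of_nat (dfact (2*n+3)) * (z^(2*n+3) * ek (n+1) ((of_real a)^2) - (of_real a)^(2*n+3) * ek (n+1) (z^2))"
    using kappa_Suc[of "Suc n" z "of_real a"] by (simp add: numeral_eq_Suc)
  have e: "ek (2*n+3) w = ek (2*n+1) w + w^(2*n+2)/fact (2*n+2) + w^(2*n+3)/fact(2*n+3)" for w :: complex
  proof -
    have "2*n+3 = Suc (Suc (2*n+1))" by simp
    then show ?thesis by (simp add: ek_Suc numeral_eq_Suc)
  qed
  have d1: "2*n+4 - 1 = 2*n+3" "2*n+2 - 1 = 2*n+1" "Suc (Suc n) - 1 = n+1" "Suc n - 1 = n"
    "Suc (Suc n) + 1 = n+3" "2 * Suc (Suc n) = 2*n+4" "Suc n + 1 = n+2" "2 * Suc n = 2*n+2" by simp_all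
  show ?thesis unfolding Lm_def k d1 unfolding e DL_def
    by (simp add: of_real_ek algebra_simps del: fact_Suc power_Suc)
qed


definition Gform :: "complex \<Rightarrow> complex \<Rightarrow> complex \<Rightarrow> complex \<Rightarrow> complex \<Rightarrow> complex \<Rightarrow> complex \<Rightarrow> complex \<Rightarrow> complex \<Rightarrow> complex \<Rightarrow> complex" where
 "Gform c A z Z p E E1 ez F0 F1 =
   (z-A)^2*(2*z^4*Z*F1 - (2*c+3)*z^2*Z*F0) + A*(2*(z-A)^2-1)*(z^3*Z*E1 - A^3*p*ez)
   + A^3*(z-A)*(2*c+3+2*z*A)*z^2*Z*p/(c+1) - A*(z-A)*(2*z^4*Z*E1 - (2*c+3)*z^2*Z*E)
   - 2*(z-A)^3*F1*(A*z^2*Z + z^3*Z)"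

lemma Gcore0:
  fixes u v A z Z p E ez :: complex
  assumes nz: "u \<noteq> 0" "v \<noteq> 0" and uv: "u + 1 = v"
  shows "Gform u A z (z^2*Z) (A^2*p/u) (E + A^2*p/u) (E + A^2*p/u + A^4*p/(u*v)) (u*ez + z^4*Z/v)
      ((u-A^2)*E + A^2*p + (E + A^2*p/u)) ((u-A^2)*E + A^2*p + (E + A^2*p/u) + (E + A^2*p/u + A^4*p/(u*v)))
   = A^2 * Gform (u - 1) A z Z p E (E + A^2*p/u) ez ((u-A^2)*E + A^2*p) ((u-A^2)*E + A^2*p + (E + A^2*p/u))
     + (z-A)^3*((u-A^2)*E + A^2*p + (E + A^2*p/u))*(A*(2*A^2-2*(u-1)-3)*z^2*Z + (2*A^2-2*(u-1)-5)*z^3*Z)"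
proof -
  have e: "u - 1 + 1 = u" by simp
  show ?thesis
    unfolding Gform_def e uv using nz
    apply (simp add: field_simps)
    apply (rule disjI2)?
    using uv[symmetric] apply algebra
    done
qed

lemma Gcore:
  fixes c A z Z p E ez E1 E2 F0 F1 F2 ez2 :: complex
  assumes nz: "c+1 \<noteq> 0" "c+2 \<noteq> 0"
   and h: "E1 = E + A^2*p/(c+1)" "E2 = E1 + A^4*p/((c+1)*(c+2))"
     "ez2 = (c+1)*ez + z^4*Z/(c+2)" "F0 = (c+1-A^2)*E + A^2*p"
     "F1 = F0 + E1" "F2 = F1 + E2"
  shows "Gform (c+1) A z (z^2*Z) (A^2*p/(c+1)) E1 E2 ez2 F1 F2
   = A^2 * Gform c A z Z p E E1 ez F0 F1
     + (z-A)^3*F1*(A*(2*A^2-2*c-3)*z^2*Z + (2*A^2-2*c-5)*z^3*Z)"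
proof -
  have uv: "(c+1) + 1 = c+2" by simp
  have cc: "c + 1 - 1 = c" by simp
  show ?thesis using Gcore0[OF nz uv, of A z Z p E ez] unfolding cc h(6) unfolding h(5) unfolding h(2,4) unfolding h(1,3)
    by (simp add: algebra_simps)
qed


lemma fact_dfact: "fact (Suc n) = dfact (Suc n) * dfact n"
proof (induction n)
  case 0 then show ?case by simp
next
  case (Suc n)
  have "(fact (Suc (Suc n))::nat) = Suc (Suc n) * fact (Suc n)" by (simp only: fact_Suc of_nat_id)
  also have "\<dots> = Suc (Suc n) * (dfact (Suc n) * dfact n)" by (simp only: Suc.IH)
  also have "\<dots> = dfact (Suc (Suc n)) * dfact (Suc n)" by (simp only: dfact.simps mult.commute mult.left_commute)
  finally show ?case .
qed

lemma fact_2k2: "(fact (2*k+2) :: complex) = 2^(k+1) * fact (k+1) * of_nat (dfact (2*k+1))"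
proof -
  have "fact (2*k+2) = dfact (2*k+2) * dfact (2*k+1)"
    using fact_dfact[of "2*k+1"] by simp
  also have "dfact (2*k+2) = 2^(k+1) * fact (k+1)" using dfact_even[of "k+1"] by simp
  finally have "fact (2*k+2) = 2^(k+1) * fact (k+1) * dfact (2*k+1)" .
  then have "(of_nat (fact (2*k+2)) :: complex) = of_nat (2^(k+1)) * of_nat (fact (k+1)) * of_nat (dfact (2*k+1))" by (simp only: of_nat_mult)
  then show ?thesis by (simp only: of_nat_fact of_nat_power of_nat_numeral)
qed

lemma dfact_2k3: "(of_nat (dfact (2*k+3)) :: complex) = (2 * of_nat k + 3) * of_nat (dfact (2*k+1))"
proof -
  have e: "2*Suc k+1 = 2*k+3" by simp
  have "dfact (2*k+3) = (2*k+3) * dfact (2*k+1)" using dfact_odd_Suc[of k] unfolding e .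
  then have "(of_nat (dfact (2*k+3)) :: complex) = of_nat ((2*k+3) * dfact (2*k+1))" by (simp only:)
  then show ?thesis by simp
qed

definition Sk :: "nat \<Rightarrow> complex \<Rightarrow> complex \<Rightarrow> complex" where
  "Sk k z A = (\<Sum>j\<le>k. (A^2)^(k-j) * fk j (A^2) * (A*(2*A^2 - 2*of_nat j - 1)*z^(2*j) + (2*A^2 - 2*of_nat j - 3)*z^(2*j+1)))"

definition Gk :: "nat \<Rightarrow> complex \<Rightarrow> complex \<Rightarrow> complex" where
  "Gk k z A = (z-A)^2*(2*z^(2*k+4)*fk (k+1) (A^2) - (2*of_nat k+3)*z^(2*k+2)*fk k (A^2))
     + (of_nat (dfact (2*k+3)) / 2^(k+2)) * A * DL k z A
     - 2*(z-A)^3*fk (k+1) (A^2)*(A*z^(2*k+2) + z^(2*k+3))"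

lemma Gk_form: "Gk k z A = Gform (of_nat k) A z (z^(2*k)) ((A^2)^k / fact k) (ek k (A^2)) (ek (k+1) (A^2))
   (fact k * ek (k+1) (z^2)) (fk k (A^2)) (fk (k+1) (A^2))"
proof -
  define Q :: complex where "Q = 2^k"
  define D :: complex where "D = of_nat (dfact (2*k+1))"
  define fc :: complex where "fc = fact k"
  define c :: complex where "c = of_nat k"
  define c1 where "c1 = c + 1"
  define d3 where "d3 = 2*c+3"
  define Z where "Z = z^(2*k)"
  define P where "P = (A^2)^k"
  have nz: "Q \<noteq> 0" "D \<noteq> 0" "fc \<noteq> 0" "c1 \<noteq> 0" "d3 \<noteq> 0"
  proof -
    show "Q \<noteq> 0" "fc \<noteq> 0" "c1 \<noteq> 0" unfolding Q_def fc_def c1_def c_def by simp_all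
    show "D \<noteq> 0" unfolding D_def using dfact_pos[of "2*k+1"] by simp
    have "(2*of_nat k + 3::complex) = of_nat (2*k+3)" by simp
    also have "\<dots> \<noteq> 0" by (simp only: of_nat_eq_0_iff)
    finally show "d3 \<noteq> 0" unfolding d3_def c_def .
  qed
  have w1: "(2*z*A)^(2*k+2) / fact (2*k+2) = 2*Q*z^2*Z*A^2*P/(c1*fc*D)"
  proof -
    have a1: "A^(2*k) = P" unfolding P_def by (simp add: power_mult)
    have a2: "z^(2*k) = Z" by (simp add: Z_def)
    have a3: "(2::complex)^(2*k) = Q^2" unfolding Q_def by (simp add: power_mult[symmetric] mult.commute)
    have "(2*z*A)^(2*k+2) = 2^(2*k)*2^2 * (z^(2*k)*z^2) * (A^(2*k)*A^2)" by (simp only: power_mult_distrib power_add mult_ac)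
    then have h1: "(2*z*A)^(2*k+2) = 4 * Q^2 * z^2*Z*A^2*P" unfolding a1 a2 a3 by (simp add: algebra_simps)
    have h2: "(fact (2*k+2)::complex) = 2*Q*(c1*fc)*D"
      unfolding fact_2k2 Q_def c1_def c_def fc_def D_def by (simp add: algebra_simps)
    show ?thesis unfolding h1 h2 using nz by (simp add: field_simps power2_eq_square)
  qed
  have w2: "(2*z*A)^(2*k+3) / fact (2*k+3) = (2*z*A)^(2*k+2) / fact (2*k+2) * (2*z*A) / d3"
  proof -
    have h: "(fact (2*k+3)::complex) = d3 * fact (2*k+2)"
      unfolding d3_def c_def by (simp add: numeral_eq_Suc)
    have h3: "(2*z*A)^(2*k+3) = (2*z*A)^(2*k+2)*(2*z*A)" by (simp add: numeral_eq_Suc)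
    have g: "X*Y/(d*F) = X/F*Y/d" for X Y d F :: complex by simp
    show ?thesis unfolding h h3 g ..
  qed
  have p: "z^(2*k+4) = z^4*Z" "z^(2*k+2) = z^2*Z" "z^(2*k+3) = z^3*Z" "A^(2*k+3) = A^3*P"
     "(2::complex)^(k+2) = 4*Q" "(2::complex)^(k+3) = 8*Q"
    unfolding Z_def P_def Q_def by (simp_all add: power_add power_mult power2_eq_square)
  have pp: "(A^2)^k / fact k = P / fc" unfolding P_def fc_def ..
  show ?thesis
    unfolding Gk_def DL_def Gform_def dfact_2k3 w2 unfolding w1 p pp
    unfolding Q_def[symmetric] D_def[symmetric] fc_def[symmetric] c_def[symmetric] Z_def[symmetric] P_def[symmetric]
    unfolding c1_def[symmetric] d3_def[symmetric]
    using nz apply (simp add: field_simps)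
    unfolding c1_def d3_def by algebra
qed

lemma pow_fact_Suc: "(x::complex)^(Suc n) / fact (Suc n) = x * (x^n / fact n) / (of_nat n + 1)"
  by (simp add: field_simps)

lemma Sk_Suc: "Sk (Suc k) z A = A^2 * Sk k z A + fk (Suc k) (A^2) * (A*(2*A^2 - 2*of_nat (Suc k) - 1)*z^(2*Suc k) + (2*A^2 - 2*of_nat (Suc k) - 3)*z^(2*Suc k+1))"
proof -
  define T where "T j = fk j (A^2) * (A*(2*A^2 - 2*of_nat j - 1)*z^(2*j) + (2*A^2 - 2*of_nat j - 3)*z^(2*j+1))" for j
  have S: "Sk n z A = (\<Sum>j\<le>n. (A^2)^(n-j) * T j)" for n unfolding Sk_def T_def by (simp only: mult.assoc)
  have "(\<Sum>j\<le>k. (A^2)^(Suc k-j) * T j) = A^2 * (\<Sum>j\<le>k. (A^2)^(k-j) * T j)"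
    unfolding sum_distrib_left by (rule sum.cong) (auto simp: Suc_diff_le)
  then show ?thesis unfolding S sum.atMost_Suc T_def by simp
qed

lemma inner: "(z-A)^3 * Sk k z A = Gk k z A"
proof (induction k)
  case 0
  show ?case unfolding Gk_form Gform_def Sk_def
    apply (simp add: fk_Suc ek_Suc)
    apply algebra
    done
next
  case (Suc k)
  define X where "X = A^2"
  define c :: complex where "c = of_nat k"
  define p where "p = X^k / fact k"
  define Z where "Z = z^(2*k)"
  have nz: "c+1 \<noteq> 0" "c+2 \<noteq> 0"
  proof -
    show "c+1 \<noteq> 0" unfolding c_def by simp
    have "c + 2 = of_nat (Suc k) + 1" unfolding c_def by simp
    then show "c+2 \<noteq> 0" by (metis opn_nz(2))
  qed
  have pf1: "X^(Suc k) / fact (Suc k) = A^2*p/(c+1)"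
    unfolding pow_fact_Suc p_def c_def X_def by simp
  have pf2: "X^(Suc (Suc k)) / fact (Suc (Suc k)) = A^4*p/((c+1)*(c+2))"
  proof -
    have e: "(of_nat (Suc k) + 1 :: complex) = c+2" by (simp add: c_def)
    have "X^(Suc (Suc k)) / fact (Suc (Suc k)) = X * (X^(Suc k)/fact (Suc k)) / (of_nat (Suc k) + 1)" by (rule pow_fact_Suc)
    also have "\<dots> = X * (A^2*p/(c+1)) / (c+2)" unfolding pf1 e ..
    finally have "X^(Suc (Suc k)) / fact (Suc (Suc k)) = X * (A^2*p/(c+1)) / (c+2)" .
    then show ?thesis using nz unfolding X_def by (simp add: field_simps)
  qed
  have zf: "fact (Suc k) * ((z^2)^(Suc (Suc k)) / fact (Suc (Suc k))) = z^4*Z/(c+2)"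
  proof -
    have e: "(of_nat (Suc k) + 1 :: complex) = c+2" "(of_nat k + 1 :: complex) = c+1" by (simp_all add: c_def)
    have q1: "(z^2)^(Suc (Suc k)) / fact (Suc (Suc k)) = z^2 * (z^2 * ((z^2)^k/fact k) / (c+1)) / (c+2)"
      unfolding pow_fact_Suc[of "z^2" "Suc k"] pow_fact_Suc[of "z^2" k] e ..
    have q2: "(fact (Suc k)::complex) = (c+1) * fact k" unfolding c_def by simp
    have q3: "(z^2)^k = Z" unfolding Z_def by (simp add: power_mult)
    have g: "a \<noteq> 0 \<Longrightarrow> f \<noteq> 0 \<Longrightarrow> b \<noteq> 0 \<Longrightarrow> (a*f) * (u*(u*(Y/f)/a)/b) = u^2*Y/b" for a f b u Y :: complex
      by (simp add: field_simps power2_eq_square)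
    have q4: "(z^2)^2 = z^4" by (simp add: power_mult[symmetric])
    show ?thesis unfolding q1 q2 g[OF nz(1) fact_nonzero nz(2)] q3 q4 ..
  qed
  have h: "ek (Suc k) X = ek k X + A^2*p/(c+1)"
     "ek (Suc k + 1) X = ek (Suc k) X + A^4*p/((c+1)*(c+2))"
     "fact (Suc k) * ek (Suc k + 1) (z^2) = (c+1)*(fact k * ek (k+1) (z^2)) + z^4*Z/(c+2)"
     "fk k X = (c+1-X)*ek k X + X*p"
     "fk (Suc k) X = fk k X + ek (Suc k) X"
     "fk (Suc k + 1) X = fk (Suc k) X + ek (Suc k + 1) X"
  proof -
    show "ek (Suc k) X = ek k X + A^2*p/(c+1)" using ek_Suc[of k X] pf1 by simp
    show "ek (Suc k + 1) X = ek (Suc k) X + A^4*p/((c+1)*(c+2))" using ek_Suc[of "Suc k" X] pf2 by simp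
    have "fact (Suc k) * ek (Suc k + 1) (z^2) = fact (Suc k) * ek (k+1) (z^2) + fact (Suc k) * ((z^2)^(Suc (Suc k)) / fact (Suc (Suc k)))"
      using ek_Suc[of "Suc k" "z^2"] by (simp add: algebra_simps)
    also have "\<dots> = (c+1)*(fact k * ek (k+1) (z^2)) + z^4*Z/(c+2)" unfolding zf c_def by simp
    finally show "fact (Suc k) * ek (Suc k + 1) (z^2) = (c+1)*(fact k * ek (k+1) (z^2)) + z^4*Z/(c+2)" .
    show "fk k X = (c+1-X)*ek k X + X*p" unfolding fk_alt[of k X] c_def p_def ..
    show "fk (Suc k) X = fk k X + ek (Suc k) X" by (rule fk_Suc)
    show "fk (Suc k + 1) X = fk (Suc k) X + ek (Suc k + 1) X" using fk_Suc[of "Suc k" X] by simp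
  qed
  note core = Gcore[OF nz h(1)[unfolded X_def] h(2)[unfolded X_def] h(3) h(4)[unfolded X_def] h(5)[unfolded X_def] h(6)[unfolded X_def]]
  have G1: "Gk (Suc k) z A = Gform (c+1) A z (z^2*Z) (A^2*p/(c+1)) (ek (Suc k) X) (ek (Suc k + 1) X)
     (fact (Suc k) * ek (Suc k + 1) (z^2)) (fk (Suc k) X) (fk (Suc k + 1) X)"
  proof -
    have e1: "(of_nat (Suc k)::complex) = c+1" unfolding c_def by simp
    have e2: "z^(2*Suc k) = z^2*Z" unfolding Z_def by (simp add: power_add power2_eq_square)
    show ?thesis unfolding Gk_form e1 e2 pf1[unfolded X_def] X_def ..
  qed
  have "(z-A)^3 * Sk (Suc k) z A = A^2 * Gk k z A + (z-A)^3 * fk (Suc k) X * (A*(2*A^2 - 2*(c+1) - 1)*(z^2*Z) + (2*A^2 - 2*(c+1) - 3)*(z^3*Z))"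
  proof -
    have e1: "(of_nat (Suc k)::complex) = c+1" unfolding c_def by simp
    have e2: "z^(2*Suc k) = z^2*Z" "z^(2*Suc k+1) = z^3*Z" unfolding Z_def by (simp_all add: power_add power2_eq_square power3_eq_cube)
    show ?thesis unfolding Sk_Suc e1 e2 Suc.IH[symmetric] X_def by (simp add: algebra_simps)
  qed
  also have "\<dots> = Gk (Suc k) z A"
  proof -
    have GK: "Gk k z A = Gform c A z Z p (ek k (A^2)) (ek (Suc k) (A^2)) (fact k * ek (k+1) (z^2)) (fk k (A^2)) (fk (Suc k) (A^2))"
      unfolding Gk_form c_def Z_def p_def X_def by simp
    show ?thesis unfolding G1 X_def core GK by (simp add: algebra_simps)
  qed
  finally show ?case .
qed


lemma dfact_nz_real[simp]: "real (dfact n) \<noteq> 0" using dfact_pos[of n] by simp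
lemma dfact_nz_complex[simp]: "(of_nat (dfact n) :: complex) \<noteq> 0" using dfact_pos[of n] by simp
lemma fk_nz[simp]: "fk k ((a::real)^2) \<noteq> 0" using fk_pos[of "a^2" k] by simp

lemma dfact_2k3_real: "real (dfact (2*k+3)) = (2 * real k + 3) * real (dfact (2*k+1))"
proof -
  have e: "2*Suc k+1 = 2*k+3" by simp
  have "dfact (2*k+3) = (2*k+3) * dfact (2*k+1)" using dfact_odd_Suc[of k] unfolding e .
  then have "real (dfact (2*k+3)) = real ((2*k+3) * dfact (2*k+1))" by (simp only:)
  then show ?thesis by simp
qed

definition Tsum :: "real \<Rightarrow> nat \<Rightarrow> nat \<Rightarrow> real" where
  "Tsum a j k = (\<Sum>l=j..k. real (l+1-j) * (2*a^2)^(l-j) / real (dfact (2*l+3)))"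
definition Usum :: "real \<Rightarrow> nat \<Rightarrow> nat \<Rightarrow> real" where
  "Usum a j k = (\<Sum>l=j..k. real (l-j) * (2*a^2)^(l-j) / real (dfact (2*l+3)))"

lemma sum_pull: "(\<Sum>l\<in>S. real (f l) * real M / real (dfact (g l)) * b^(h l))
   = real M * (\<Sum>l\<in>S. real (f l) * b^(h l) / real (dfact (g l)))"
  unfolding sum_distrib_left by (rule sum.cong) simp_all

lemma beta_even_eq: "beta_even a k j = a * cjk a j k * (real (2*j+1) / real (2*k+3) * (2*a^2)^(k-j) + 2 * (real (dfact (2*k+1)) * Tsum a j k))"
  unfolding beta_even_def Tsum_def sum_pull[of "\<lambda>l. l+1-j" "dfact (2*k+1)" "\<lambda>l. 2*l+3" "2*a^2" "\<lambda>l. l-j"] ..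

lemma beta_odd_eq: "beta_odd a k j = cjk a j k * (real (2*j+3) / real (2*k+3) * (2*a^2)^(k-j) + 2 * (real (dfact (2*k+1)) * Usum a j k))"
  unfolding beta_odd_def Usum_def sum_pull[of "\<lambda>l. l-j" "dfact (2*k+1)" "\<lambda>l. 2*l+3" "2*a^2" "\<lambda>l. l-j"] ..

definition pe :: "real \<Rightarrow> nat \<Rightarrow> nat \<Rightarrow> real" where
  "pe a k j = a * 2^j * fk j (a^2) * (real (2*j+1) * (2*a^2)^(k-j) / real (dfact (2*k+3)) + 2 * Tsum a j k)"
definition po :: "real \<Rightarrow> nat \<Rightarrow> nat \<Rightarrow> real" where
  "po a k j = 2^j * fk j (a^2) * (real (2*j+3) * (2*a^2)^(k-j) / real (dfact (2*k+3)) + 2 * Usum a j k)"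

lemma pe_eq: "2^k * fk k (a^2) / real (dfact (2*k+1)) * beta_even a k j = pe a k j"
proof -
  define d3 where "d3 = 2 * real k + 3"
  have n: "d3 \<noteq> 0" unfolding d3_def by (metis add_nonneg_pos mult_nonneg_nonneg of_nat_0_le_iff zero_le_numeral zero_less_numeral less_irrefl)
  have e: "real (2*k+3) = d3" unfolding d3_def by simp
  have e2: "real (dfact (2*k+3)) = d3 * real (dfact (2*k+1))" unfolding d3_def by (rule dfact_2k3_real)
  show ?thesis unfolding beta_even_eq pe_def cjk_def e e2 using n fk_nz[of k a] fk_nz[of j a] dfact_nz_real[of "2*k+1"]
    by (simp add: field_simps)
qed

lemma po_eq: "2^k * fk k (a^2) / real (dfact (2*k+1)) * beta_odd a k j = po a k j"
proof -
  define d3 where "d3 = 2 * real k + 3"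
  have n: "d3 \<noteq> 0" unfolding d3_def by (metis add_nonneg_pos mult_nonneg_nonneg of_nat_0_le_iff zero_le_numeral zero_less_numeral less_irrefl)
  have e: "real (2*k+3) = d3" unfolding d3_def by simp
  have e2: "real (dfact (2*k+3)) = d3 * real (dfact (2*k+1))" unfolding d3_def by (rule dfact_2k3_real)
  show ?thesis unfolding beta_odd_eq po_def cjk_def e e2 using n fk_nz[of k a] fk_nz[of j a] dfact_nz_real[of "2*k+1"]
    by (simp add: field_simps)
qed

lemma sum_split2: "(\<Sum>i\<le>2*(k::nat)+1. g i) = (\<Sum>j\<le>k. g (2*j) + g (2*j+1))"
proof (induction k)
  case 0 then show ?case by simp
next
  case (Suc k)
  have e: "2 * Suc k + 1 = Suc (Suc (2*k+1))" by simp
  show ?case unfolding e sum.atMost_Suc Suc.IH by (simp add: add.assoc)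
qed

definition Pk :: "real \<Rightarrow> nat \<Rightarrow> complex \<Rightarrow> complex" where
  "Pk a k z = (\<Sum>j\<le>k. of_real (pe a k j) * z^(2*j) + of_real (po a k j) * z^(2*j+1))"

lemma P_eq: "of_real (2^k * fk k (a^2) / real (dfact (2*k+1))) * q_pre_odd a k z = Pk a k z"
  unfolding q_pre_odd_def sum_split2 Pk_def sum_distrib_left
proof (rule sum.cong)
  fix j assume "j \<in> {..k}"
  show "of_real (2^k * fk k (a^2) / real (dfact (2*k+1))) *
        (of_real (if even (2*j) then beta_even a k (2*j div 2) else beta_odd a k (2*j div 2)) * z^(2*j) +
         of_real (if even (2*j+1) then beta_even a k ((2*j+1) div 2) else beta_odd a k ((2*j+1) div 2)) * z^(2*j+1))
      = of_real (pe a k j) * z^(2*j) + of_real (po a k j) * z^(2*j+1)"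
    unfolding pe_eq[symmetric] po_eq[symmetric] by (simp add: algebra_simps)
qed simp

lemma step_common:
  fixes a :: real
  assumes "j \<le> k"
  shows "(2*a^2)^(Suc k - j) = 2*a^2*(2^(k-j)*(a^2)^(k-j))" "(2*a^2)^(k-j) = 2^(k-j)*(a^2)^(k-j)"
    "(2::real)^k = 2^j * 2^(k-j)" "real (dfact (2*Suc k+3)) = (2*real k+5) * real (dfact (2*k+3))"
proof -
  have "Suc k - j = Suc (k-j)" using assms by simp
  then show "(2*a^2)^(Suc k - j) = 2*a^2*(2^(k-j)*(a^2)^(k-j))" by (simp add: power_mult_distrib)
  show "(2*a^2)^(k-j) = 2^(k-j)*(a^2)^(k-j)" by (simp add: power_mult_distrib)
  have "k = j + (k-j)" using assms by simp
  then show "(2::real)^k = 2^j * 2^(k-j)" by (metis power_add)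
  have e: "2*Suc k+1 = 2*k+3" by simp
  show "real (dfact (2*Suc k+3)) = (2*real k+5) * real (dfact (2*k+3))"
    using dfact_2k3_real[of "Suc k"] unfolding e by simp
qed

lemma pe_step:
  assumes jk: "j \<le> k"
  shows "pe a (Suc k) j = pe a k j + 2^k / real (dfact (2*k+3)) * ((a^2)^(k-j) * fk j (a^2) * (a * (2*a^2 - 2*real j - 1)))"
proof -
  have T: "Tsum a j (Suc k) = Tsum a j k + real (Suc k + 1 - j) * (2*a^2)^(Suc k - j) / real (dfact (2*Suc k+3))"
    using jk by (simp add: Tsum_def)
  have r: "real (Suc k + 1 - j) = real k + 2 - real j" using jk by (simp add: of_nat_diff)
  define u where "u = (a^2)^(k-j)"
  define v where "v = (2::real)^(k-j)"
  define w where "w = (2::real)^j"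
  define D3 where "D3 = real (dfact (2*k+3))"
  define e5 where "e5 = 2*real k + 5"
  have n1: "D3 \<noteq> 0" unfolding D3_def by (rule dfact_nz_real)
  have n2: "e5 \<noteq> 0" unfolding e5_def by (smt (verit) of_nat_0_le_iff)
  note n = n1 n2
  note sc = step_common(1,2)[OF jk, of a, folded u_def v_def w_def D3_def e5_def] step_common(3,4)[OF jk, folded u_def v_def w_def D3_def e5_def]
  show ?thesis unfolding pe_def T r sc u_def[symmetric] v_def[symmetric] w_def[symmetric] D3_def[symmetric]
    using n apply (simp add: field_simps)
    unfolding e5_def by (simp add: algebra_simps)
qed

lemma po_step:
  assumes jk: "j \<le> k"
  shows "po a (Suc k) j = po a k j + 2^k / real (dfact (2*k+3)) * ((a^2)^(k-j) * fk j (a^2) * (2*a^2 - 2*real j - 3))"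
proof -
  have T: "Usum a j (Suc k) = Usum a j k + real (Suc k - j) * (2*a^2)^(Suc k - j) / real (dfact (2*Suc k+3))"
    using jk by (simp add: Usum_def)
  have r: "real (Suc k - j) = real k + 1 - real j" using jk by (simp add: of_nat_diff)
  define u where "u = (a^2)^(k-j)"
  define v where "v = (2::real)^(k-j)"
  define w where "w = (2::real)^j"
  define D3 where "D3 = real (dfact (2*k+3))"
  define e5 where "e5 = 2*real k + 5"
  have n1: "D3 \<noteq> 0" unfolding D3_def by (rule dfact_nz_real)
  have n2: "e5 \<noteq> 0" unfolding e5_def by (smt (verit) of_nat_0_le_iff)
  note n = n1 n2
  note sc = step_common(1,2)[OF jk, of a, folded u_def v_def w_def D3_def e5_def] step_common(3,4)[OF jk, folded u_def v_def w_def D3_def e5_def]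
  show ?thesis unfolding po_def T r sc u_def[symmetric] v_def[symmetric] w_def[symmetric] D3_def[symmetric]
    using n apply (simp add: field_simps)
    unfolding e5_def by (simp add: algebra_simps)
qed

lemma pe_top: "pe a (Suc k) (Suc k) = 2^k / real (dfact (2*k+3)) * (2 * fk (Suc k) (a^2) * a)"
proof -
  define D3 where "D3 = real (dfact (2*k+3))"
  define e5 where "e5 = 2*real k + 5"
  have n1: "D3 \<noteq> 0" unfolding D3_def by (rule dfact_nz_real)
  have n2: "e5 \<noteq> 0" unfolding e5_def by (smt (verit) of_nat_0_le_iff)
  note n = n1 n2
  have d: "real (dfact (2*Suc k+3)) = e5 * D3" using step_common(4)[of k k] unfolding e5_def D3_def by simp
  have T: "Tsum a (Suc k) (Suc k) = 1 / real (dfact (2*Suc k+3))" by (simp add: Tsum_def)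
  have r: "real (2 * Suc k + 1) = e5 - 2" unfolding e5_def by simp
  show ?thesis unfolding pe_def T d r D3_def[symmetric] using n by (simp add: field_simps)
qed

lemma po_top: "po a (Suc k) (Suc k) = 2^k / real (dfact (2*k+3)) * (2 * fk (Suc k) (a^2))"
proof -
  define D3 where "D3 = real (dfact (2*k+3))"
  define e5 where "e5 = 2*real k + 5"
  have n1: "D3 \<noteq> 0" unfolding D3_def by (rule dfact_nz_real)
  have n2: "e5 \<noteq> 0" unfolding e5_def by (smt (verit) of_nat_0_le_iff)
  note n = n1 n2
  have d: "real (dfact (2*Suc k+3)) = e5 * D3" using step_common(4)[of k k] unfolding e5_def D3_def by simp
  have T: "Usum a (Suc k) (Suc k) = 0" by (simp add: Usum_def)
  have r: "real (2 * Suc k + 3) = e5" unfolding e5_def by simp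
  show ?thesis unfolding po_def T d r D3_def[symmetric] using n by (simp add: field_simps)
qed


lemma P_step: "Pk a (Suc k) z = Pk a k z + of_real (2^k / real (dfact (2*k+3))) *
   (Sk k z (of_real a) + 2 * fk (Suc k) ((of_real a)^2) * (of_real a * z^(2*k+2) + z^(2*k+3)))"
proof -
  let ?A = "(of_real a :: complex)"
  let ?r = "(2::real)^k / real (dfact (2*k+3))"
  have j: "of_real (pe a (Suc k) j) * z^(2*j) + of_real (po a (Suc k) j) * z^(2*j+1)
     = (of_real (pe a k j) * z^(2*j) + of_real (po a k j) * z^(2*j+1))
       + of_real ?r * ((?A^2)^(k-j) * fk j (?A^2) * (?A*(2*?A^2 - 2*of_nat j - 1)*z^(2*j) + (2*?A^2 - 2*of_nat j - 3)*z^(2*j+1)))"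
    if "j \<in> {..k}" for j
  proof -
    have jk: "j \<le> k" using that by simp
    show ?thesis unfolding pe_step[OF jk] po_step[OF jk]
      by (simp add: of_real_fk algebra_simps)
  qed
  have top: "of_real (pe a (Suc k) (Suc k)) * z^(2*Suc k) + of_real (po a (Suc k) (Suc k)) * z^(2*Suc k+1)
     = of_real ?r * (2 * fk (Suc k) (?A^2) * (?A * z^(2*k+2) + z^(2*k+3)))"
  proof -
    have e: "2*Suc k = 2*k+2" "2*Suc k+1 = 2*k+3" by simp_all
    show ?thesis unfolding pe_top po_top e by (simp add: of_real_fk algebra_simps power_add power3_eq_cube)
  qed
  have "Pk a (Suc k) z = (\<Sum>j\<le>k. of_real (pe a (Suc k) j) * z^(2*j) + of_real (po a (Suc k) j) * z^(2*j+1))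
      + (of_real (pe a (Suc k) (Suc k)) * z^(2*Suc k) + of_real (po a (Suc k) (Suc k)) * z^(2*Suc k+1))"
    unfolding Pk_def by (rule sum.atMost_Suc)
  also have "(\<Sum>j\<le>k. of_real (pe a (Suc k) j) * z^(2*j) + of_real (po a (Suc k) j) * z^(2*j+1))
     = (\<Sum>j\<le>k. (of_real (pe a k j) * z^(2*j) + of_real (po a k j) * z^(2*j+1))
       + of_real ?r * ((?A^2)^(k-j) * fk j (?A^2) * (?A*(2*?A^2 - 2*of_nat j - 1)*z^(2*j) + (2*?A^2 - 2*of_nat j - 3)*z^(2*j+1))))"
    by (rule sum.cong[OF refl], rule j, assumption)
  also have "\<dots> = Pk a k z + of_real ?r * Sk k z ?A"
    unfolding sum.distrib Pk_def Sk_def sum_distrib_left ..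
  finally show ?thesis unfolding top by (simp add: algebra_simps)
qed

lemma odd_P: "(z - of_real a)^3 * Pk a k z = (z - of_real a)^2 * z^(2*k+2) * of_real (2^k * fk k (a^2) / real (dfact (2*k+1)))
   + of_real a / 4 * Lm (k+1) z a"
proof (induction k)
  case 0
  have k1: "kappa_g (Suc 0) z w = 2 * (z - w)" for w using kappa_Suc[of 0 z w] by simp
  have d3: "dfact 3 = 3" by (simp add: numeral_eq_Suc)
  show ?case
    by (simp add: Pk_def pe_def po_def Tsum_def Usum_def Lm_def k1 d3 ek_Suc algebra_simps power2_eq_square power3_eq_cube)
next
  case (Suc k)
  define A where "A = (of_real a :: complex)"
  define Q :: complex where "Q = 2^k"
  define D :: complex where "D = of_nat (dfact (2*k+1))"
  define d3 :: complex where "d3 = 2 * of_nat k + 3"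
  define Z where "Z = z^(2*k)"
  define F0 where "F0 = fk k (A^2)"
  define F1 where "F1 = fk (Suc k) (A^2)"
  define L1 where "L1 = Lm (Suc k) z a"
  define S where "S = Sk k z A"
  define DLk where "DLk = DL k z A"
  have nz: "Q \<noteq> 0" "D \<noteq> 0" "d3 \<noteq> 0"
  proof -
    show "Q \<noteq> 0" unfolding Q_def by simp
    show "D \<noteq> 0" unfolding D_def by (rule dfact_nz_complex)
    have "(2*of_nat k + 3::complex) = of_nat (2*k+3)" by simp
    also have "\<dots> \<noteq> 0" by (simp only: of_nat_eq_0_iff)
    finally show "d3 \<noteq> 0" unfolding d3_def .
  qed
  have D3: "(of_nat (dfact (2*k+3)) :: complex) = d3 * D" unfolding d3_def D_def by (rule dfact_2k3)
  have IH: "(z - A)^3 * Pk a k z = (z - A)^2 * (z^2*Z) * (Q * F0 / D) + A / 4 * L1"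
    using Suc.IH unfolding A_def Q_def D_def F0_def L1_def Z_def
    by (simp add: of_real_fk power_add power2_eq_square mult.assoc)
  have Ps: "Pk a (Suc k) z = Pk a k z + Q / (d3 * D) * (S + 2 * F1 * (A * (z^2*Z) + z^3*Z))"
    unfolding P_step S_def F1_def A_def D3[symmetric] Q_def Z_def
    by (simp add: power_add power2_eq_square power3_eq_cube)
  have In: "(z-A)^3 * S = (z-A)^2*(2*(z^4*Z)*F1 - d3*(z^2*Z)*F0) + (d3 * D / (4*Q)) * A * DLk - 2*(z-A)^3*F1*(A*(z^2*Z) + z^3*Z)"
    unfolding S_def inner Gk_def D3 DLk_def F0_def F1_def Z_def d3_def Q_def
    by (simp add: power_add power2_eq_square power3_eq_cube numeral_eq_Suc mult.assoc)
  have L: "Lm (Suc k + 1) z a = L1 + DLk" unfolding L1_def DLk_def A_def using Lm_Suc[of k z a] by simp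
  have R: "of_real (2^(Suc k) * fk (Suc k) (a^2) / real (dfact (2*Suc k+1))) = 2*Q*F1/(d3*D)"
  proof -
    have e: "2*Suc k+1 = 2*k+3" by simp
    show ?thesis unfolding e D3[symmetric] Q_def F1_def A_def by (simp add: of_real_fk)
  qed
  have z4: "z^(2*Suc k+2) = z^4*Z" unfolding Z_def by (simp add: power_add numeral_eq_Suc)
  have "(z - A)^3 * Pk a (Suc k) z = (z - A)^3 * Pk a k z + Q / (d3 * D) * ((z-A)^3 * S + 2 * (z-A)^3 * F1 * (A * (z^2*Z) + z^3*Z))"
    unfolding Ps by (simp add: algebra_simps)
  also have "\<dots> = (z - A)^2 * (z^4*Z) * (2*Q*F1/(d3*D)) + A / 4 * (L1 + DLk)"
    unfolding IH In using nz
    by (simp add: field_simps)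
  finally show ?case unfolding A_def R z4 L .
qed


declare dfact_pos[simp]
lemma dfact_ne0[simp]: "dfact n \<noteq> 0" using dfact_pos[of n] by linarith

theorem odd_main: "(z - of_real a)^3 * q_pre_odd a k z =
           (z - of_real a)^2 * z^(2*k+2)
         + of_real (a * real (dfact (2*k+1)) / (2^(k+2) * fk k (a^2))) * Lm (k+1) z a"
proof -
  define c where "c = 2^k * fk k (a^2) / real (dfact (2*k+1))"
  have c0: "c \<noteq> 0" unfolding c_def by simp
  have cc: "(of_real c :: complex) \<noteq> 0" using c0 by simp
  have key: "of_real (a * real (dfact (2*k+1)) / (2^(k+2) * fk k (a^2))) * of_real c = (of_real a / 4 :: complex)"
  proof -
    have h: "a * real (dfact (2*k+1)) / (2^(k+2) * fk k (a^2)) * c = a / 4"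
      unfolding c_def by (simp add: field_simps power_add)
    have "of_real (a * real (dfact (2*k+1)) / (2^(k+2) * fk k (a^2))) * of_real c
       = (of_real (a * real (dfact (2*k+1)) / (2^(k+2) * fk k (a^2)) * c) :: complex)" by (rule of_real_mult[symmetric])
    also have "\<dots> = of_real (a/4)" unfolding h ..
    also have "\<dots> = of_real a / 4" by simp
    finally show ?thesis .
  qed
  have e: "(z - of_real a)^3 * (of_real c * q_pre_odd a k z) = (z - of_real a)^2 * z^(2*k+2) * of_real c + of_real a / 4 * Lm (k+1) z a"
    using odd_P[where a=a and k=k and z=z] unfolding P_eq[symmetric] c_def .
  have "of_real c * ((z - of_real a)^3 * q_pre_odd a k z) = of_real c * ((z - of_real a)^2 * z^(2*k+2)
         + of_real (a * real (dfact (2*k+1)) / (2^(k+2) * fk k (a^2))) * Lm (k+1) z a)"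
    unfolding distrib_left using e key[symmetric]
    by (simp add: algebra_simps)
  then show ?thesis using cc by simp
qed

definition Rsum :: "real \<Rightarrow> nat \<Rightarrow> nat \<Rightarrow> real" where
  "Rsum a j k = (\<Sum>l=j..k. real (l-j) * (2*a^2)^(l-j) / real (dfact (2*l+1)))"
definition Vsum :: "real \<Rightarrow> nat \<Rightarrow> nat \<Rightarrow> real" where
  "Vsum a j k = (\<Sum>l\<in>{j..<k}. real (l+1-j) * (2*a^2)^(l-j) / real (dfact (2*l+5)))"
definition Uosum :: "real \<Rightarrow> nat \<Rightarrow> nat \<Rightarrow> real" where
  "Uosum a j k = (\<Sum>l\<in>{j..<k}. real (l-j) * (2*a^2)^(l-j) / real (dfact (2*l+3)))"

lemma alpha_even_eq: "alpha_even a k j = cjk a j k * (real (dfact (2*k+3)) * Tsum a j k - real (dfact (2*k+1)) * Rsum a j k)"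
  unfolding alpha_even_def Tsum_def Rsum_def
    sum_pull[of "\<lambda>l. l+1-j" "dfact (2*k+3)" "\<lambda>l. 2*l+3" "2*a^2" "\<lambda>l. l-j"]
    sum_pull[of "\<lambda>l. l-j" "dfact (2*k+1)" "\<lambda>l. 2*l+1" "2*a^2" "\<lambda>l. l-j"] ..

lemma alpha_odd_eq: "alpha_odd a k j = 2 * a * cjk a j k * (real (dfact (2*k+3)) * Vsum a j k - real (dfact (2*k+1)) * Uosum a j k)"
  unfolding alpha_odd_def Vsum_def Uosum_def
    sum_pull[of "\<lambda>l. l+1-j" "dfact (2*k+3)" "\<lambda>l. 2*l+5" "2*a^2" "\<lambda>l. l-j"]
    sum_pull[of "\<lambda>l. l-j" "dfact (2*k+1)" "\<lambda>l. 2*l+3" "2*a^2" "\<lambda>l. l-j"] ..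

lemma T_Suc: "j \<le> Suc k \<Longrightarrow> Tsum a j (Suc k) = Tsum a j k + real (Suc k + 1 - j) * (2*a^2)^(Suc k - j) / real (dfact (2*Suc k+3))"
  by (simp add: Tsum_def)
lemma U_Suc: "j \<le> Suc k \<Longrightarrow> Usum a j (Suc k) = Usum a j k + real (Suc k - j) * (2*a^2)^(Suc k - j) / real (dfact (2*Suc k+3))"
  by (simp add: Usum_def)
lemma R_Suc: "j \<le> Suc k \<Longrightarrow> Rsum a j (Suc k) = Rsum a j k + real (Suc k - j) * (2*a^2)^(Suc k - j) / real (dfact (2*Suc k+1))"
  by (simp add: Rsum_def)
lemma V_Suc: "j \<le> k \<Longrightarrow> Vsum a j (Suc k) = Vsum a j k + real (k + 1 - j) * (2*a^2)^(k - j) / real (dfact (2*k+5))"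
  by (simp add: Vsum_def)

lemma R1: "j \<le> k \<Longrightarrow> 2*a^2 * Tsum a j k - Rsum a j k = real (k+1-j) * (2*a^2)^(k+1-j) / real (dfact (2*k+3))"
proof (induction k rule: dec_induct)
  case base
  show ?case by (simp add: Tsum_def Rsum_def)
next
  case (step k)
  have e1: "Suc k + 1 - j = Suc (Suc k - j)" "Suc k - j = Suc (k - j)" "k + 1 - j = Suc (k-j)" using step by auto
  have e2: "2*Suc k+1 = 2*k+3" by simp
  show ?case unfolding T_Suc[of j k a, OF le_SucI[OF step(1)]] R_Suc[of j k a, OF le_SucI[OF step(1)]]
  proof -
    have "2*a^2 * (Tsum a j k + real (Suc k + 1 - j) * (2*a^2)^(Suc k - j) / real (dfact (2*Suc k+3)))
      - (Rsum a j k + real (Suc k - j) * (2*a^2)^(Suc k - j) / real (dfact (2*Suc k+1)))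
      = (2*a^2 * Tsum a j k - Rsum a j k) + 2*a^2 * (real (Suc k + 1 - j) * (2*a^2)^(Suc k - j) / real (dfact (2*Suc k+3)))
        - real (Suc k - j) * (2*a^2)^(Suc k - j) / real (dfact (2*Suc k+1))" by (simp add: algebra_simps)
    also have "\<dots> = 2*a^2 * (real (Suc k + 1 - j) * (2*a^2)^(Suc k - j) / real (dfact (2*Suc k+3)))"
      unfolding step(3) e2 e1 by simp
    also have "\<dots> = real (Suc k + 1 - j) * (2 * a\<^sup>2) ^ (Suc k + 1 - j) / real (dfact (2 * Suc k + 3))"
      unfolding e1 by simp
    finally show "2*a^2 * (Tsum a j k + real (Suc k + 1 - j) * (2*a^2)^(Suc k - j) / real (dfact (2*Suc k+3)))
      - (Rsum a j k + real (Suc k - j) * (2*a^2)^(Suc k - j) / real (dfact (2*Suc k+1)))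
      = real (Suc k + 1 - j) * (2 * a\<^sup>2) ^ (Suc k + 1 - j) / real (dfact (2 * Suc k + 3))" .
  qed
qed

lemma R2: "j \<le> k \<Longrightarrow> 2*a^2 * Vsum a j k = Usum a j k"
proof (induction k rule: dec_induct)
  case base
  show ?case by (simp add: Vsum_def Usum_def)
next
  case (step k)
  have e1: "Suc k - j = Suc (k - j)" "k + 1 - j = Suc (k-j)" using step by auto
  have e2: "2*Suc k+3 = 2*k+5" by simp
  show ?case unfolding V_Suc[OF step(1)] U_Suc[of j k a, OF le_SucI[OF step(1)]] distrib_left step(3) e1 e2
    by simp
qed

lemma R3: "j \<le> k \<Longrightarrow> Usum a j k = Uosum a j k + real (k-j) * (2*a^2)^(k-j) / real (dfact (2*k+3))"
proof -
  assume "j \<le> k"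
  have "{j..k} = {j..<Suc k}" by auto
  then show ?thesis using \<open>j \<le> k\<close> unfolding Usum_def Uosum_def by simp
qed


lemma cjk_self: "cjk a n n = 1" unfolding cjk_def by simp

lemma beta_top: "beta_even a n n = a" "beta_odd a n n = 1"
proof -
  define d3 where "d3 = 2*real n+3"
  define D where "D = real (dfact (2*n+1))"
  have d: "real (dfact (2*n+3)) = d3 * D" unfolding d3_def D_def by (rule dfact_2k3_real)
  have n3: "d3 \<noteq> 0" "D \<noteq> 0" unfolding d3_def D_def by (smt (verit) of_nat_0_le_iff, simp)
  have T: "Tsum a n n = 1 / real (dfact (2*n+3))" by (simp add: Tsum_def)
  have U: "Usum a n n = 0" by (simp add: Usum_def)
  have r: "real (2*n+1) = d3 - 2" "real (2*n+3) = d3" unfolding d3_def by simp_all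
  show "beta_even a n n = a" unfolding beta_even_eq cjk_self T d r D_def[symmetric] using n3
    by (simp add: field_simps)
  show "beta_odd a n n = 1" unfolding beta_odd_eq cjk_self U r using n3
    by (simp add: field_simps)
qed

lemma alpha_odd_top: "alpha_odd a k k = 0"
  by (simp add: alpha_odd_eq Vsum_def Uosum_def)

lemma coefE:
  assumes jk: "j \<le> k"
  shows "a * fk k (a^2) * alpha_even a k j = fk (Suc k) (a^2) * beta_even a (Suc k) j - a^2 * fk k (a^2) * beta_even a k j"
proof -
  define B where "B = (2*a^2)^(k-j)"
  define D where "D = real (dfact (2*k+1))"
  define d3 where "d3 = 2*real k + 3"
  define d5 where "d5 = 2*real k + 5"
  define T where "T = Tsum a j k"
  have n: "D \<noteq> 0" "d3 \<noteq> 0" "d5 \<noteq> 0" unfolding D_def d3_def d5_def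
    by (simp, smt (verit) of_nat_0_le_iff, smt (verit) of_nat_0_le_iff)
  have D3: "real (dfact (2*k+3)) = d3 * D" unfolding d3_def D_def by (rule dfact_2k3_real)
  have D5: "real (dfact (2*Suc k+3)) = d5 * (d3 * D)" using step_common(4)[OF jk] unfolding D3 d5_def .
  have e: "2*Suc k+1 = 2*k+3" by simp
  have p1: "(2*a^2)^(Suc k - j) = 2*a^2*B" "(2*a^2)^(k+1-j) = 2*a^2*B" unfolding B_def using jk
    by (simp_all add: Suc_diff_le)
  have r: "real (Suc k + 1 - j) = real k + 2 - real j" "real (k+1-j) = real k + 1 - real j"
     "real (2*j+1) = 2*real j + 1" "real (2*k+3) = d3" "real (2*Suc k+3) = d5" unfolding d3_def d5_def using jk by (simp_all add: of_nat_diff)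
  have Rr: "Rsum a j k = 2*a^2*T - (real k + 1 - real j) * (2*a^2*B) / (d3*D)"
    using R1[OF jk, of a] unfolding T_def p1 r D3 by simp
  have F1: "fk (Suc k) (a^2) \<noteq> 0" "fk k (a^2) \<noteq> 0" by simp_all
  show ?thesis unfolding alpha_even_eq beta_even_eq T_Suc[OF le_SucI[OF jk]] e D3 D5 p1 r Rr T_def[symmetric]
    B_def[symmetric] D_def[symmetric] cjk_def
    using n F1 apply (simp add: field_simps)
    unfolding d3_def d5_def by (simp add: algebra_simps)
qed

lemma coefO:
  assumes jk: "j \<le> k"
  shows "a * fk k (a^2) * alpha_odd a k j = fk (Suc k) (a^2) * beta_odd a (Suc k) j - a^2 * fk k (a^2) * beta_odd a k j"
proof -
  define B where "B = (2*a^2)^(k-j)"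
  define D where "D = real (dfact (2*k+1))"
  define d3 where "d3 = 2*real k + 3"
  define d5 where "d5 = 2*real k + 5"
  define V where "V = Vsum a j k"
  have n: "D \<noteq> 0" "d3 \<noteq> 0" "d5 \<noteq> 0" unfolding D_def d3_def d5_def
    by (simp, smt (verit) of_nat_0_le_iff, smt (verit) of_nat_0_le_iff)
  have D3: "real (dfact (2*k+3)) = d3 * D" unfolding d3_def D_def by (rule dfact_2k3_real)
  have D5: "real (dfact (2*Suc k+3)) = d5 * (d3 * D)" using step_common(4)[OF jk] unfolding D3 d5_def .
  have e: "2*Suc k+1 = 2*k+3" by simp
  have p1: "(2*a^2)^(Suc k - j) = 2*a^2*B" unfolding B_def using jk
    by (simp_all add: Suc_diff_le)
  have r: "real (Suc k - j) = real k + 1 - real j" "real (k-j) = real k - real j"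
     "real (2*j+3) = 2*real j + 3" "real (2*k+3) = d3" "real (2*Suc k+3) = d5" unfolding d3_def d5_def using jk by (simp_all add: of_nat_diff)
  have Uu: "Usum a j k = 2*a^2*V" using R2[OF jk, of a] unfolding V_def by simp
  have Uo: "Uosum a j k = 2*a^2*V - (real k - real j) * B / (d3*D)"
    using R3[OF jk, of a] unfolding Uu r D3 B_def by simp
  have F1: "fk (Suc k) (a^2) \<noteq> 0" "fk k (a^2) \<noteq> 0" by simp_all
  show ?thesis unfolding alpha_odd_eq beta_odd_eq U_Suc[OF le_SucI[OF jk]] e D3 D5 p1 r Uo Uu V_def[symmetric]
    B_def[symmetric] D_def[symmetric] cjk_def
    using n F1 apply (simp add: field_simps)
    unfolding d3_def d5_def by algebra
qed


lemma qo_split: "q_pre_odd a k z = (\<Sum>j\<le>k. of_real (beta_even a k j) * z^(2*j) + of_real (beta_odd a k j) * z^(2*j+1))"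
  unfolding q_pre_odd_def sum_split2 by simp

lemma qe_split: "q_pre_even a k z = (\<Sum>j\<le>k. of_real (alpha_even a k j) * z^(2*j) + of_real (alpha_odd a k j) * z^(2*j+1))"
proof -
  define f where "f i = of_real (if even i then alpha_even a k (i div 2) else alpha_odd a k (i div 2)) * z^i" for i
  have "(\<Sum>i\<le>2*k+1. f i) = (\<Sum>i\<le>2*k. f i) + f (Suc (2*k))"
    by (simp only: add.commute[of _ 1] plus_1_eq_Suc sum.atMost_Suc)
  moreover have "f (Suc (2*k)) = 0" unfolding f_def by (simp add: alpha_odd_top)
  ultimately have "(\<Sum>i\<le>2*k. f i) = (\<Sum>i\<le>2*k+1. f i)" by simp
  then show ?thesis unfolding q_pre_even_def f_def[symmetric] unfolding sum_split2 f_def by simp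
qed

lemma even_rel: "of_real (a * fk k (a^2)) * q_pre_even a k z
   = of_real (fk (Suc k) (a^2)) * (q_pre_odd a (Suc k) z - z^(2*k+3) - of_real a * z^(2*k+2))
     - of_real (a^2 * fk k (a^2)) * q_pre_odd a k z"
proof -
  let ?F0 = "fk k (a^2)" and ?F1 = "fk (Suc k) (a^2)"
  have top: "of_real (beta_even a (Suc k) (Suc k)) * z^(2*Suc k) + of_real (beta_odd a (Suc k) (Suc k)) * z^(2*Suc k+1)
      = of_real a * z^(2*k+2) + z^(2*k+3)"
  proof -
    have e: "2*Suc k = 2*k+2" "2*Suc k+1 = 2*k+3" "2*k+2+1 = 2*k+3" by simp_all
    show ?thesis unfolding beta_top e by (simp only: of_real_1 mult_1 e)
  qed
  have q1: "q_pre_odd a (Suc k) z - z^(2*k+3) - of_real a * z^(2*k+2)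
     = (\<Sum>j\<le>k. of_real (beta_even a (Suc k) j) * z^(2*j) + of_real (beta_odd a (Suc k) j) * z^(2*j+1))"
    unfolding qo_split[of a "Suc k"] sum.atMost_Suc top by simp
  have pj: "of_real (a * ?F0) * (of_real (alpha_even a k j) * z^(2*j) + of_real (alpha_odd a k j) * z^(2*j+1))
     = of_real ?F1 * (of_real (beta_even a (Suc k) j) * z^(2*j) + of_real (beta_odd a (Suc k) j) * z^(2*j+1))
       - of_real (a^2 * ?F0) * (of_real (beta_even a k j) * z^(2*j) + of_real (beta_odd a k j) * z^(2*j+1))"
    if "j \<in> {..k}" for j
  proof -
    have jk: "j \<le> k" using that by simp
    have "of_real (a * ?F0) * (of_real (alpha_even a k j) * z^(2*j) + of_real (alpha_odd a k j) * z^(2*j+1))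
       = of_real (a * ?F0 * alpha_even a k j) * z^(2*j) + of_real (a * ?F0 * alpha_odd a k j) * z^(2*j+1)"
      by (simp add: algebra_simps)
    also have "\<dots> = of_real (?F1 * beta_even a (Suc k) j - a^2 * ?F0 * beta_even a k j) * z^(2*j)
       + of_real (?F1 * beta_odd a (Suc k) j - a^2 * ?F0 * beta_odd a k j) * z^(2*j+1)"
      unfolding coefE[OF jk] coefO[OF jk] ..
    also have "\<dots> = of_real ?F1 * (of_real (beta_even a (Suc k) j) * z^(2*j) + of_real (beta_odd a (Suc k) j) * z^(2*j+1))
       - of_real (a^2 * ?F0) * (of_real (beta_even a k j) * z^(2*j) + of_real (beta_odd a k j) * z^(2*j+1))"
      by (simp add: algebra_simps)
    finally show ?thesis .
  qed
  show ?thesis unfolding q1 qe_split qo_split[of a k] sum_distrib_left sum_subtractf[symmetric]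
    by (rule sum.cong[OF refl], rule pj, assumption)
qed

lemma core_even:
  fixes A z Zp qe qo0 qo1 L1 L2 F0 F1 e1 D D3 Q :: complex
  assumes nz: "F0 \<noteq> 0" "A \<noteq> 0" "Q \<noteq> 0" "F1 \<noteq> 0" and hF: "F1 = F0 + e1"
   and rel: "A*F0*qe = F1*(qo1 - z*Zp - A*Zp) - A^2*F0*qo0"
   and o0: "(z-A)^3*qo0 = (z-A)^2*Zp + A*D/(4*Q*F0) * L1"
   and o1: "(z-A)^3*qo1 = (z-A)^2*(z^2*Zp) + A*D3/(8*Q*F1) * L2"
  shows "(z-A)^3*qe = A*(z-A)^2*(e1/F0)*Zp + D3/(8*Q*F0)*L2 - A^2*D/(4*Q*F0)*L1"
proof -
  have "A*F0*((z-A)^3*qe) = (z-A)^3 * (A*F0*qe)" by (simp add: algebra_simps)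
  also have "\<dots> = F1*((z-A)^3*qo1) - F1*(z-A)^3*(z*Zp + A*Zp) - A^2*F0*((z-A)^3*qo0)"
    unfolding rel by (simp add: algebra_simps)
  also have "\<dots> = A*F0*(A*(z-A)^2*(e1/F0)*Zp + D3/(8*Q*F0)*L2 - A^2*D/(4*Q*F0)*L1)"
    unfolding o0 o1 using nz apply (simp add: field_simps)
    using hF by algebra
  finally show ?thesis using nz by simp
qed


lemma even_nz:
  assumes a0: "a \<noteq> 0"
  shows "(z - of_real a)^3 * q_pre_even a k z =
           of_real a * (z - of_real a)^2 * of_real (ek (k+1) (a^2) / fk k (a^2)) * z^(2*k+2)
         + of_real (real (dfact (2*k+3)) / (2^(k+3) * fk k (a^2))) * Lm (k+2) z a
         - of_real (a^2 * real (dfact (2*k+1)) / (2^(k+2) * fk k (a^2))) * Lm (k+1) z a"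
proof -
  let ?A = "of_real a :: complex"
  let ?F0 = "of_real (fk k (a^2)) :: complex"
  let ?F1 = "of_real (fk (Suc k) (a^2)) :: complex"
  let ?e1 = "of_real (ek (Suc k) (a^2)) :: complex"
  let ?D = "of_nat (dfact (2*k+1)) :: complex"
  let ?D3 = "of_nat (dfact (2*k+3)) :: complex"
  let ?Q = "2^k :: complex"
  have nz: "?F0 \<noteq> 0" "?A \<noteq> 0" "?Q \<noteq> 0" "?F1 \<noteq> 0" using a0 by simp_all
  have hF: "?F1 = ?F0 + ?e1" unfolding fk_Suc by simp
  have rel: "?A * ?F0 * q_pre_even a k z = ?F1 * (q_pre_odd a (Suc k) z - z * z^(2*k+2) - ?A * z^(2*k+2)) - ?A^2 * ?F0 * q_pre_odd a k z"
  proof -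
    have e0: "2*k+3 = Suc (2*k+2)" by simp
    have e: "z^(2*k+3) = z * z^(2*k+2)" unfolding e0 by (rule power_Suc)
    show ?thesis using even_rel[of a k z] unfolding e by simp
  qed
  have c1: "of_real (a * real (dfact (2*k+1)) / (2^(k+2) * fk k (a^2))) = ?A * ?D / (4 * ?Q * ?F0)"
    by (simp add: power_add)
  have c2: "of_real (a * real (dfact (2*Suc k+1)) / (2^(Suc k+2) * fk (Suc k) (a^2))) = ?A * ?D3 / (8 * ?Q * ?F1)"
  proof -
    have e: "2*Suc k+1 = 2*k+3" by simp
    show ?thesis unfolding e by (simp add: power_add)
  qed
  have c3: "of_real (ek (k+1) (a^2) / fk k (a^2)) = ?e1 / ?F0" by simp
  have c4: "of_real (real (dfact (2*k+3)) / (2^(k+3) * fk k (a^2))) = ?D3 / (8 * ?Q * ?F0)"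
    by (simp add: power_add)
  have c5: "of_real (a^2 * real (dfact (2*k+1)) / (2^(k+2) * fk k (a^2))) = ?A^2 * ?D / (4 * ?Q * ?F0)"
    by (simp add: power_add)
  have o0: "(z - ?A)^3 * q_pre_odd a k z = (z - ?A)^2 * z^(2*k+2) + ?A * ?D / (4 * ?Q * ?F0) * Lm (k+1) z a"
    using odd_main[where a=a and k=k and z=z] unfolding c1 .
  have o1: "(z - ?A)^3 * q_pre_odd a (Suc k) z = (z - ?A)^2 * (z^2 * z^(2*k+2)) + ?A * ?D3 / (8 * ?Q * ?F1) * Lm (k+2) z a"
  proof -
    have e: "z^(2*Suc k+2) = z^2 * z^(2*k+2)" by (simp add: power_add[symmetric])
    have l: "Suc k + 1 = k+2" by simp
    show ?thesis using odd_main[where a=a and k="Suc k" and z=z] unfolding c2 e l .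
  qed
  show ?thesis unfolding c3 c4 c5 by (rule core_even[OF nz hF rel o0 o1])
qed


lemma continuous_ek[continuous_intros]:
  fixes f :: "'a::t2_space \<Rightarrow> 'b::{real_normed_field,field_char_0}"
  shows "continuous F f \<Longrightarrow> continuous F (\<lambda>x. ek n (f x))"
  unfolding ek_def divide_inverse by (intro continuous_intros)

lemma continuous_fk[continuous_intros]:
  fixes f :: "'a::t2_space \<Rightarrow> 'b::{real_normed_field,field_char_0}"
  shows "continuous F f \<Longrightarrow> continuous F (\<lambda>x. fk n (f x))"
  unfolding fk_alt divide_inverse by (intro continuous_intros)

lemma fk_0_nz: "fk k (0::real) \<noteq> 0" using fk_pos[of 0 k] by simp

definition gdiff :: "nat \<Rightarrow> complex \<Rightarrow> real \<Rightarrow> complex" where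
  "gdiff k z a = (z - of_real a)^3 * q_pre_even a k z -
          (of_real a * (z - of_real a)^2 * of_real (ek (k+1) (a^2) / fk k (a^2)) * z^(2*k+2)
         + of_real (real (dfact (2*k+3)) / (2^(k+3) * fk k (a^2))) * Lm (k+2) z a
         - of_real (a^2 * real (dfact (2*k+1)) / (2^(k+2) * fk k (a^2))) * Lm (k+1) z a)"

lemma gdiff_cont: "isCont (gdiff k z) 0"
proof -
  have e: "gdiff k z = (\<lambda>a. (z - of_real a)^3 * (\<Sum>j\<le>k. of_real (alpha_even a k j) * z^(2*j) + of_real (alpha_odd a k j) * z^(2*j+1)) -
          (of_real a * (z - of_real a)^2 * of_real (ek (k+1) (a^2) / fk k (a^2)) * z^(2*k+2)
         + of_real (real (dfact (2*k+3)) / (2^(k+3) * fk k (a^2))) * Lm (k+2) z a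
         - of_real (a^2 * real (dfact (2*k+1)) / (2^(k+2) * fk k (a^2))) * Lm (k+1) z a))"
    unfolding gdiff_def qe_split ..
  show ?thesis unfolding e alpha_even_eq alpha_odd_eq cjk_def Tsum_def Rsum_def Vsum_def Uosum_def Lm_def kappa_g_def
    by (intro continuous_intros) (simp_all add: fk_0_nz)
qed

lemma even_main: "(z - of_real a)^3 * q_pre_even a k z =
           of_real a * (z - of_real a)^2 * of_real (ek (k+1) (a^2) / fk k (a^2)) * z^(2*k+2)
         + of_real (real (dfact (2*k+3)) / (2^(k+3) * fk k (a^2))) * Lm (k+2) z a
         - of_real (a^2 * real (dfact (2*k+1)) / (2^(k+2) * fk k (a^2))) * Lm (k+1) z a"
proof -
  have gz: "gdiff k z b = 0" if "b \<noteq> 0" for b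
    unfolding gdiff_def using even_nz[OF that, of z k] by simp
  have "gdiff k z a = 0"
  proof (cases "a = 0")
    case False then show ?thesis by (rule gz)
  next
    case True
    have l1: "(gdiff k z \<longlongrightarrow> gdiff k z 0) (at 0)" using gdiff_cont by (simp add: isCont_def)
    have ev: "\<forall>\<^sub>F b in at (0::real). gdiff k z b = 0"
      unfolding eventually_at_filter using gz by simp
    have l2: "(gdiff k z \<longlongrightarrow> 0) (at 0)" using tendsto_eventually[OF ev] .
    have "gdiff k z 0 = 0" using tendsto_unique[OF at_neq_bot l1 l2] .
    then show ?thesis using True by simp
  qed
  then show ?thesis unfolding gdiff_def by simp
qed

theorem lemma4p2:
  fixes a :: real and k :: nat and z :: complex
  shows "((z - of_real a)^3 * q_pre_odd a k z =
           (z - of_real a)^2 * z^(2*k+2)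
         + of_real (a * real (dfact (2*k+1)) / (2^(k+2) * fk k (a^2))) * Lm (k+1) z a)
    \<and> ((z - of_real a)^3 * q_pre_even a k z =
           of_real a * (z - of_real a)^2 * of_real (ek (k+1) (a^2) / fk k (a^2)) * z^(2*k+2)
         + of_real (real (dfact (2*k+3)) / (2^(k+3) * fk k (a^2))) * Lm (k+2) z a
         - of_real (a^2 * real (dfact (2*k+1)) / (2^(k+2) * fk k (a^2))) * Lm (k+1) z a)"
  using odd_main even_main by blast


end
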